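(* Let $R$ be an order in a quadratic number field. Then $R$ is super-multiplicative: for every pair of non-zero ideals $I,J$ of $R$ one has $N(IJ)\geq N(I)N(J)$.
   Context: An order in a number field $K$ is a subring of $K$ with fraction field $K$ whose additive group is finitely generated; a quadratic number field is a number field of degree $2$ over $\mathbb{Q}$. For a non-zero ideal $I$ of $R$, $N(I)=[R:I]$ is its index as an additive subgroup. A ring is super-multiplicative if for all ideals $I,J$ with $[R:IJ]$ finite one has $N(IJ)\geq N(I)N(J)$. *)

theory Defs
  imports Complex_Main
begin

text \<open>Every number field embeds into the complex numbers, so we model a quadratic
number field as a subfield K of the complex numbers of degree 2 over the rationals,
i.e. with Q-basis 1, w for some w in K not rational.\<close>

definition quadratic_field :: "complex set \<Rightarrow> bool" where
  "quadratic_field K \<longleftrightarrow>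
     0 \<in> K \<and> 1 \<in> K \<and>
     (\<forall>x\<in>K. \<forall>y\<in>K. x + y \<in> K \<and> x * y \<in> K) \<and>
     (\<forall>x\<in>K. - x \<in> K) \<and>
     (\<forall>x\<in>K. x \<noteq> 0 \<longrightarrow> inverse x \<in> K) \<and>
     (\<exists>w\<in>K. w \<notin> \<rat> \<and> K = {of_rat a + of_rat b * w | a b. True})"

definition is_order :: "complex set \<Rightarrow> complex set \<Rightarrow> bool" where
  "is_order K R \<longleftrightarrow>
     R \<subseteq> K \<and> 0 \<in> R \<and> 1 \<in> R \<and>
     (\<forall>x\<in>R. \<forall>y\<in>R. x + y \<in> R \<and> x * y \<in> R) \<and>
     (\<forall>x\<in>R. - x \<in> R) \<and>
     (\<forall>x\<in>K. \<exists>a\<in>R. \<exists>b\<in>R. b \<noteq> 0 \<and> x = a / b) \<and>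
     (\<exists>S. finite S \<and> S \<subseteq> R \<and>
          R = {(\<Sum>s\<in>S. of_int (c s) * s) | c. True})"

definition ring_ideal :: "complex set \<Rightarrow> complex set \<Rightarrow> bool" where
  "ring_ideal R I \<longleftrightarrow>
     I \<subseteq> R \<and> 0 \<in> I \<and>
     (\<forall>x\<in>I. \<forall>y\<in>I. x + y \<in> I) \<and>
     (\<forall>r\<in>R. \<forall>x\<in>I. r * x \<in> I)"

definition ideal_mult :: "complex set \<Rightarrow> complex set \<Rightarrow> complex set" where
  "ideal_mult I J =
     {(\<Sum>k<(n::nat). x k * y k) | n x y. \<forall>k<n. x k \<in> I \<and> y k \<in> J}"

definition ideal_norm :: "complex set \<Rightarrow> complex set \<Rightarrow> nat" where
  "ideal_norm R I = card ((\<lambda>x. (\<lambda>i. x + i) ` I) ` R)"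

end

theory Submission
  imports Defs
begin


definition E :: "complex \<Rightarrow> int \<Rightarrow> int \<Rightarrow> complex" where
  "E w x y = of_int x + of_int y * w"

locale qord =
  fixes R :: "complex set" and w :: complex and p q :: int
  assumes R_eq: "R = {E w x y | x y. True}"
    and irr: "w \<notin> \<rat>"
    and weq: "w^2 + of_int p * w + of_int q = 0"
begin

lemma E_inj: "E w x y = E w x' y' \<longleftrightarrow> x = x' \<and> y = y'"
proof
  assume h: "E w x y = E w x' y'"
  have "y = y'"
  proof (rule ccontr)
    assume "y \<noteq> y'"
    then have ne: "(of_int y' - of_int y :: complex) \<noteq> 0" by simp
    from h have "of_int x - of_int x' = (of_int y' - of_int y) * w" 
      unfolding E_def by (simp add: algebra_simps)
    then have "w = (of_int x - of_int x') / (of_int y' - of_int y)" using ne by (simp add: field_simps)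
    then have "w \<in> \<rat>" by simp
    with irr show False by simp
  qed
  with h show "x = x' \<and> y = y'" unfolding E_def by simp
qed simp

lemma E_add: "E w x y + E w x' y' = E w (x + x') (y + y')"
  unfolding E_def by (simp add: algebra_simps)

lemma E_mult: "E w x y * E w x' y' = E w (x*x' - q*y*y') (x*y' + y*x' - p*y*y')"
proof -
  have w2: "w*w = - of_int p * w - of_int q"
  proof -
    have "w*w = (w^2 + of_int p*w + of_int q) - of_int p * w - of_int q" by (simp add: power2_eq_square)
    thus ?thesis using weq by simp
  qed
  have "E w x y * E w x' y' = of_int (x*x') + of_int (x*y' + y*x') * w + of_int (y*y') * (w*w)"
    unfolding E_def by (simp add: algebra_simps)
  also have "\<dots> = E w (x*x' - q*y*y') (x*y' + y*x' - p*y*y')"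
    unfolding w2 E_def by (simp add: algebra_simps)
  finally show ?thesis .
qed

lemma E_int: "of_int k * E w x y = E w (k*x) (k*y)"
  unfolding E_def by (simp add: algebra_simps)

lemma E_0: "E w 0 0 = 0" unfolding E_def by simp

lemma E_eq0: "E w x y = 0 \<longleftrightarrow> x = 0 \<and> y = 0"
  using E_inj[of x y 0 0] by (simp add: E_0)

lemma E_in: "E w x y \<in> R" using R_eq by auto

end



lemma int_subgroup:
  fixes G :: "int set"
  assumes z: "0 \<in> G" and ad: "\<And>x y. x \<in> G \<Longrightarrow> y \<in> G \<Longrightarrow> x + y \<in> G"
    and ng: "\<And>x. x \<in> G \<Longrightarrow> -x \<in> G"
  shows "\<exists>g\<ge>0. G = {k*g | k. True}"
proof (cases "G = {0}")
  case True
  then show ?thesis by (intro exI[of _ 0]) auto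
next
  case False
  have mult: "k * x \<in> G" if "x \<in> G" for k x
  proof (induction k rule: int_induct[where k=0])
    case base then show ?case using z by simp
  next
    case (step1 i) then show ?case using ad[of "i*x" x] that by (simp add: algebra_simps)
  next
    case (step2 i) then show ?case using ad[of "i*x" "-x"] ng[OF that] by (simp add: algebra_simps)
  qed
  from False z obtain x where x: "x \<in> G" "x \<noteq> 0" by auto
  define P where "P = (\<lambda>n::nat. n > 0 \<and> int n \<in> G)"
  have "P (nat \<bar>x\<bar>)" using x ng[OF x(1)] unfolding P_def by (cases "x \<ge> 0") auto
  define g where "g = (LEAST n. P n)"
  have Pg: "P g" unfolding g_def by (rule LeastI) fact
  have gmin: "\<And>n. P n \<Longrightarrow> g \<le> n" unfolding g_def by (rule Least_le)
  show ?thesis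
  proof (intro exI[of _ "int g"] conjI)
    show "G = {k * int g |k. True}"
    proof
      show "{k * int g |k. True} \<subseteq> G" using mult Pg unfolding P_def by auto
      show "G \<subseteq> {k * int g |k. True}"
      proof
        fix y assume y: "y \<in> G"
        have e: "y + (- (y div int g)) * int g = y mod int g" by (simp add: minus_div_mult_eq_mod[symmetric])
        have "y + (- (y div int g)) * int g \<in> G" using ad[OF y mult[OF conjunct2[OF Pg[unfolded P_def]]]] by blast
        hence ym: "y mod int g \<in> G" unfolding e .
        have g0: "int g > 0" using Pg unfolding P_def by simp
        have "y mod int g = 0"
        proof (rule ccontr)
          assume "y mod int g \<noteq> 0"
          hence "P (nat (y mod int g))" using ym g0 unfolding P_def
            by (simp add: order_le_neq_trans pos_mod_sign)
          hence "g \<le> nat (y mod int g)" by (rule gmin)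
          moreover have "y mod int g < int g" using g0 by simp
          moreover have "y mod int g \<ge> 0" using g0 by simp
          ultimately show False by (simp add: le_nat_iff)
        qed
        hence "y = (y div int g) * int g" by (metis add_0 mod_div_mult_eq)
        thus "y \<in> {k * int g |k. True}" by blast
      qed
    qed
  qed simp
qed

context qord begin

lemma E_diff: "E w x y - E w x' y' = E w (x - x') (y - y')"
  unfolding E_def by (simp add: algebra_simps)

lemma small_mult:
  fixes n c j j' :: int
  assumes "c > 0" "0 \<le> j" "j < c" "0 \<le> j'" "j' < c" "j - j' = n * c"
  shows "n = 0"
proof (rule ccontr)
  assume "n \<noteq> 0"
  then consider "n \<ge> 1" | "n \<le> -1" by linarith
  then show False
  proof cases
    case 1 then have "n * c \<ge> 1 * c" using assms(1) mult_right_mono[of 1 n c] by simp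
    then show False using assms by linarith
  next
    case 2 then have "n * c \<le> (-1) * c" using assms(1) mult_right_mono[of n "-1" c] by simp
    then show False using assms by linarith
  qed
qed

lemma index:
  assumes a: "a > 0" and c: "c > 0" and I: "I = {E w (m*a + n*b) (n*c) | m n. True}"
  shows "ideal_norm R I = nat (a*c)"
proof -
  have memI: "E w x y \<in> I \<longleftrightarrow> (\<exists>m n. x = m*a + n*b \<and> y = n*c)" for x y
    unfolding I by (auto simp: E_inj)
  have "E w 0 0 \<in> I" unfolding memI by (rule exI[of _ 0], rule exI[of _ 0]) simp
  then have I0: "0 \<in> I" using E_0 by simp
  have IR: "I \<subseteq> R" unfolding I R_eq by auto
  have Iadd: "u + v \<in> I" if "u \<in> I" "v \<in> I" for u v
  proof -
    from that obtain m n m' n' where "u = E w (m*a + n*b) (n*c)" "v = E w (m'*a + n'*b) (n'*c)"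
      unfolding I by auto
    then have "u + v = E w ((m+m')*a + (n+n')*b) ((n+n')*c)" by (simp add: E_add algebra_simps)
    then show ?thesis unfolding I by blast
  qed
  have coset: "((+) z ` I = (+) z' ` I) \<longleftrightarrow> z - z' \<in> I" for z z'
  proof
    assume h: "(+) z ` I = (+) z' ` I"
    have "z \<in> (+) z ` I" using I0 by force
    then obtain t where "t \<in> I" "z = z' + t" using h by auto
    then show "z - z' \<in> I" by simp
  next
    assume h: "z - z' \<in> I"
    show "(+) z ` I = (+) z' ` I"
    proof
      show "(+) z ` I \<subseteq> (+) z' ` I"
      proof
        fix u assume "u \<in> (+) z ` I"
        then obtain t where t: "t \<in> I" "u = z + t" by auto
        then have "u = z' + ((z - z') + t)" by simp
        moreover have "(z - z') + t \<in> I" using Iadd h t by auto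
        ultimately show "u \<in> (+) z' ` I" by blast
      qed
    next
      show "(+) z' ` I \<subseteq> (+) z ` I"
      proof
        fix u assume "u \<in> (+) z' ` I"
        then obtain t where t: "t \<in> I" "u = z' + t" by auto
        have "z' - z \<in> I"
        proof -
          obtain x y where "z - z' = E w x y" using h IR R_eq by auto
          with h obtain m n where mn: "x = m*a + n*b" "y = n*c" using memI by auto
          have "z' - z = E w ((-m)*a + (-n)*b) ((-n)*c)"
            using \<open>z - z' = E w x y\<close> mn unfolding E_def by (simp add: algebra_simps)
          then show ?thesis unfolding I by blast
        qed
        then have "u = z + ((z' - z) + t)" "(z' - z) + t \<in> I" using t Iadd by auto
        then show "u \<in> (+) z ` I" by blast
      qed
    qed
  qed
  define f where "f = (\<lambda>(i,j). (+) (E w i j) ` I)"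
  define B where "B = {0..<a} \<times> {0..<c}"
  have img: "(\<lambda>x. (+) x ` I) ` R = f ` B"
  proof
    show "f ` B \<subseteq> (\<lambda>x. (+) x ` I) ` R" unfolding f_def B_def using E_in by auto
    show "(\<lambda>x. (+) x ` I) ` R \<subseteq> f ` B"
    proof
      fix C assume "C \<in> (\<lambda>x. (+) x ` I) ` R"
      then obtain x y where C: "C = (+) (E w x y) ` I" unfolding R_eq by auto
      define n where "n = y div c"
      define j where "j = y mod c"
      define m where "m = (x - n*b) div a"
      define i where "i = (x - n*b) mod a"
      have "x - i = m*a + n*b" unfolding i_def m_def by (simp add: algebra_simps mod_div_mult_eq[symmetric])
      moreover have "y - j = n*c" unfolding j_def n_def by (simp add: minus_mod_eq_mult_div)
      ultimately have "E w x y - E w i j \<in> I" unfolding E_diff memI by blast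
      then have "C = f (i,j)" unfolding C f_def using coset by simp
      moreover have "(i,j) \<in> B" unfolding B_def i_def j_def using a c by simp
      ultimately show "C \<in> f ` B" by blast
    qed
  qed
  have inj: "inj_on f B"
  proof (rule inj_onI)
    fix u v assume u: "u \<in> B" and v: "v \<in> B" and e: "f u = f v"
    obtain i j where ij: "u = (i,j)" by force
    obtain i' j' where ij': "v = (i',j')" by force
    have "E w i j - E w i' j' \<in> I" using e coset unfolding f_def ij ij' by simp
    then obtain m n where mn: "i - i' = m*a + n*b" "j - j' = n*c" unfolding E_diff memI by blast
    have "n = 0" using small_mult[OF c _ _ _ _ mn(2)] u v unfolding ij ij' B_def by auto
    then have "m = 0" using small_mult[OF a _ _ _ _ , of i i' m] mn(1) u v unfolding ij ij' B_def by auto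
    with \<open>n = 0\<close> mn show "u = v" unfolding ij ij' by simp
  qed
  have "ideal_norm R I = card (f ` B)" unfolding ideal_norm_def img ..
  also have "\<dots> = card B" using inj by (rule card_image)
  also have "\<dots> = nat a * nat c" unfolding B_def by (simp add: card_cartesian_product)
  also have "\<dots> = nat (a*c)" using a c by (simp add: nat_mult_distrib)
  finally show ?thesis .
qed

end



context qord begin

lemma E_neg: "- E w x y = E w (-x) (-y)" unfolding E_def by simp

lemma hnf:
  assumes id: "ring_ideal R I" and nz: "I \<noteq> {0}"
  shows "\<exists>\<alpha> \<beta> c. \<alpha> > 0 \<and> c > 0 \<and> \<alpha> dvd (\<beta>^2 - p*\<beta> + q) \<and>
           I = {E w (m*(c*\<alpha>) + n*(c*\<beta>)) (n*c) | m n. True}"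
proof -
  have IR: "I \<subseteq> R" and I0: "0 \<in> I" and Iadd: "\<And>x y. x \<in> I \<Longrightarrow> y \<in> I \<Longrightarrow> x + y \<in> I"
    and Imul: "\<And>r x. r \<in> R \<Longrightarrow> x \<in> I \<Longrightarrow> r * x \<in> I"
    using id unfolding ring_ideal_def by auto
  have Iint: "of_int k * z \<in> I" if "z \<in> I" for k z
  proof -
    have "(of_int k :: complex) = E w k 0" unfolding E_def by simp
    then show ?thesis using Imul[OF E_in that] by simp
  qed
  have Isub: "x - y \<in> I" if "x \<in> I" "y \<in> I" for x y
    using Iadd[OF that(1) Iint[OF that(2), of "-1"]] by simp
  have Iw: "w * z \<in> I" if "z \<in> I" for z
  proof -
    have "w = E w 0 1" unfolding E_def by simp
    then show ?thesis using Imul[OF E_in[of 0 1] that] by simp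
  qed
  have wE: "w * E w x y = E w (- q * y) (x - p * y)" for x y
  proof -
    have "w = E w 0 1" unfolding E_def by simp
    then have "w * E w x y = E w 0 1 * E w x y" by simp
    also have "\<dots> = E w (- q * y) (x - p * y)" unfolding E_mult by simp
    finally show ?thesis .
  qed
  define Gx where "Gx = {x. E w x 0 \<in> I}"
  define Gy where "Gy = {y. \<exists>x. E w x y \<in> I}"
  have "\<exists>g\<ge>0. Gx = {k*g | k. True}"
  proof (rule int_subgroup)
    show "0 \<in> Gx" unfolding Gx_def using I0 E_0 by simp
    show "x + y \<in> Gx" if "x \<in> Gx" "y \<in> Gx" for x y
      using Iadd[of "E w x 0" "E w y 0"] that unfolding Gx_def by (simp add: E_add)
    show "- x \<in> Gx" if "x \<in> Gx" for x
      using Iint[of "E w x 0" "-1"] that unfolding Gx_def by (simp add: E_int E_neg)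
  qed
  then obtain a0 where a0: "a0 \<ge> 0" "Gx = {k*a0 | k. True}" by blast
  have "\<exists>g\<ge>0. Gy = {k*g | k. True}"
  proof (rule int_subgroup)
    show "0 \<in> Gy" unfolding Gy_def using I0 E_0 by (intro CollectI exI[of _ 0]) simp
    show "x + y \<in> Gy" if "x \<in> Gy" "y \<in> Gy" for x y
    proof -
      from that obtain u v where "E w u x \<in> I" "E w v y \<in> I" unfolding Gy_def by auto
      then have "E w (u+v) (x+y) \<in> I" using Iadd by (simp add: E_add[symmetric])
      then show ?thesis unfolding Gy_def by blast
    qed
    show "- x \<in> Gy" if "x \<in> Gy" for x
    proof -
      from that obtain u where "E w u x \<in> I" unfolding Gy_def by auto
      then have "E w (-u) (-x) \<in> I" using Iint[of "E w u x" "-1"] by (simp add: E_int E_neg)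
      then show ?thesis unfolding Gy_def by blast
    qed
  qed
  then obtain c where c: "c \<ge> 0" "Gy = {k*c | k. True}" by blast
  have inGx: "E w x 0 \<in> I \<Longrightarrow> \<exists>k. x = k * a0" for x using a0 unfolding Gx_def by auto
  have inGy: "E w x y \<in> I \<Longrightarrow> \<exists>k. y = k * c" for x y using c unfolding Gy_def by auto
  have Ea0: "E w a0 0 \<in> I" using a0 unfolding Gx_def by auto
  have "c \<in> Gy" using c(2) by (auto intro: exI[of _ 1])
  then obtain b where b: "E w b c \<in> I" unfolding Gy_def by auto
  obtain z where z: "z \<in> I" "z \<noteq> 0" using nz I0 by auto
  obtain x y where xy: "z = E w x y" using z IR R_eq by auto
  have "E w (x - p*y) (-y) * E w x y = E w (x*x - p*x*y + q*y*y) 0"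
    unfolding E_mult by (simp add: algebra_simps)
  moreover have "E w (x - p*y) (-y) * E w x y \<in> I" using Imul[OF E_in] z xy by simp
  ultimately have "E w (x*x - p*x*y + q*y*y) 0 \<in> I" by simp
  then obtain k where k: "x*x - p*x*y + q*y*y = k * a0" using inGx by blast
  have "a0 \<noteq> 0"
  proof
    assume "a0 = 0"
    then have "E w (x - p*y) (-y) * E w x y = 0"
      using k unfolding E_mult by (simp add: algebra_simps E_0)
    then have "E w (x - p*y) (-y) = 0" using z xy by simp
    then have "x = 0" "y = 0" unfolding E_eq0 by auto
    then show False using z xy E_0 by simp
  qed
  with a0 have a0pos: "a0 > 0" by simp
  have "E w 0 a0 \<in> I" using Iw[OF Ea0] wE[of a0 0] by simp
  then obtain \<alpha> where al: "a0 = \<alpha> * c" using inGy by blast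
  have cpos: "c > 0" using c(1) al a0pos by (cases "c = 0") auto
  have alpos: "\<alpha> > 0" using al a0pos cpos by (simp add: zero_less_mult_iff)
  have "E w 0 a0 - of_int \<alpha> * E w b c \<in> I" using Isub[OF \<open>E w 0 a0 \<in> I\<close> Iint[OF b]] .
  then have "E w (- \<alpha> * b) 0 \<in> I" unfolding E_int E_diff al by simp
  then obtain k1 where "- \<alpha> * b = k1 * (\<alpha> * c)" using inGx al by blast
  then have "\<alpha> * b = \<alpha> * ((-k1) * c)" by (simp add: algebra_simps)
  then have "b = (-k1) * c" using alpos mult_cancel_left[of \<alpha> b "(-k1) * c"] by simp
  then obtain \<beta> where be: "b = c * \<beta>" by (metis mult.commute)
  have "w * E w b c - of_int (\<beta> - p) * E w b c \<in> I" using Isub[OF Iw[OF b] Iint[OF b]] .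
  then have "E w (- q * c - (\<beta> - p) * b) 0 \<in> I" unfolding wE E_int E_diff be
    by (simp add: algebra_simps)
  then obtain k2 where k2: "- q * c - (\<beta> - p) * b = k2 * (\<alpha> * c)" using inGx al by blast
  have "c * (\<beta>^2 - p*\<beta> + q) = c * (\<alpha> * (-k2))" using k2 unfolding be
    by (simp add: algebra_simps power2_eq_square)
  then have "\<beta>^2 - p*\<beta> + q = \<alpha> * (-k2)" using cpos mult_cancel_left[of c "\<beta>^2 - p*\<beta> + q" "\<alpha> * (-k2)"] by simp
  then have dv: "\<alpha> dvd (\<beta>^2 - p*\<beta> + q)" by simp
  have Ieq: "I = {E w (m*(c*\<alpha>) + n*(c*\<beta>)) (n*c) | m n. True}"
  proof
    show "I \<subseteq> {E w (m*(c*\<alpha>) + n*(c*\<beta>)) (n*c) | m n. True}"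
    proof
      fix z assume zI: "z \<in> I"
      then obtain x y where xy: "z = E w x y" using IR R_eq by auto
      then obtain n where n: "y = n * c" using inGy zI by blast
      have "E w x y - of_int n * E w b c \<in> I" using Isub[OF zI[unfolded xy] Iint[OF b]] .
      then have "E w (x - n * b) 0 \<in> I" unfolding E_int E_diff n by simp
      then obtain m where "x - n*b = m * a0" using inGx by blast
      then have "x = m*(c*\<alpha>) + n*(c*\<beta>)" unfolding al be by (simp add: algebra_simps)
      then show "z \<in> {E w (m*(c*\<alpha>) + n*(c*\<beta>)) (n*c) | m n. True}" using xy n
        by blast
    qed
    show "{E w (m*(c*\<alpha>) + n*(c*\<beta>)) (n*c) | m n. True} \<subseteq> I"
    proof
      fix z assume "z \<in> {E w (m*(c*\<alpha>) + n*(c*\<beta>)) (n*c) | m n. True}"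
      then obtain m n where z: "z = E w (m*(c*\<alpha>) + n*(c*\<beta>)) (n*c)" by blast
      have "of_int m * E w a0 0 + of_int n * E w b c \<in> I" using Iadd[OF Iint[OF Ea0] Iint[OF b]] .
      moreover have "of_int m * E w a0 0 + of_int n * E w b c = z"
        unfolding z E_int E_add al be by (simp add: algebra_simps)
      ultimately show "z \<in> I" by simp
    qed
  qed
  show ?thesis using alpos cpos dv Ieq by blast
qed

end



lemma minor_identity:
  fixes k1 k2 k3 k4 l1 l2 l3 l4 x1 x2 x3 x4 y1 y2 y3 y4 :: int
  shows "(k1*x1+k2*x2+k3*x3+k4*x4)*(l1*y1+l2*y2+l3*y3+l4*y4)
       - (k1*y1+k2*y2+k3*y3+k4*y4)*(l1*x1+l2*x2+l3*x3+l4*x4)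
     = (k1*l2-k2*l1)*(x1*y2-y1*x2) + (k1*l3-k3*l1)*(x1*y3-y1*x3) + (k1*l4-k4*l1)*(x1*y4-y1*x4)
     + (k2*l3-k3*l2)*(x2*y3-y2*x3) + (k2*l4-k4*l2)*(x2*y4-y2*x4) + (k3*l4-k4*l3)*(x3*y4-y3*x4)"
  by (simp add: algebra_simps)

context qord begin

lemma main_ineq:
  assumes idI: "ring_ideal R I" and idJ: "ring_ideal R J"
    and I: "I = {E w (m*(c*\<alpha>) + n*(c*\<beta>)) (n*c) | m n. True}"
    and J: "J = {E w (m*(d*\<gamma>) + n*(d*\<delta>)) (n*d) | m n. True}"
    and pos: "\<alpha> > 0" "\<gamma> > 0" "c > 0" "d > 0"
    and s: "\<beta>^2 - p*\<beta> + q = \<alpha> * s" and t: "\<delta>^2 - p*\<delta> + q = \<gamma> * t"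
  shows "ideal_norm R (ideal_mult I J) \<ge> nat ((c*\<alpha>)*c) * nat ((d*\<gamma>)*d)"
proof -
  define a where "a = c*\<alpha>"
  define b where "b = c*\<beta>"
  define a' where "a' = d*\<gamma>"
  define b' where "b' = d*\<delta>"
  define x1 where "x1 = a*a'"
  define y1 where "y1 = (0::int)"
  define x2 where "x2 = a*b'"
  define y2 where "y2 = a*d"
  define x3 where "x3 = b*a'"
  define y3 where "y3 = c*a'"
  define x4 where "x4 = b*b' - q*c*d"
  define y4 where "y4 = b*d + c*b' - p*c*d"
  define u1 where "u1 = E w a 0"
  define u2 where "u2 = E w b c"
  define v1 where "v1 = E w a' 0"
  define v2 where "v2 = E w b' d"
  have P1: "u1 * v1 = E w x1 y1" unfolding u1_def v1_def x1_def y1_def E_mult by simp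
  have P2: "u1 * v2 = E w x2 y2" unfolding u1_def v2_def x2_def y2_def E_mult by simp
  have P3: "u2 * v1 = E w x3 y3" unfolding u2_def v1_def x3_def y3_def E_mult by simp
  have P4: "u2 * v2 = E w x4 y4" unfolding u2_def v2_def x4_def y4_def E_mult by (simp add: algebra_simps)
  define S where "S = {E w (k1*x1+k2*x2+k3*x3+k4*x4) (k1*y1+k2*y2+k3*y3+k4*y4) | k1 k2 k3 k4. True}"
  have memS: "z \<in> S \<longleftrightarrow> (\<exists>k1 k2 k3 k4. z = E w (k1*x1+k2*x2+k3*x3+k4*x4) (k1*y1+k2*y2+k3*y3+k4*y4))" for z
    unfolding S_def by blast
  have S0: "0 \<in> S" unfolding memS
    by (rule exI[of _ 0], rule exI[of _ 0], rule exI[of _ 0], rule exI[of _ 0]) (simp add: E_0)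
  have Sadd: "z + z' \<in> S" if "z \<in> S" "z' \<in> S" for z z'
  proof -
    from that obtain k1 k2 k3 k4 l1 l2 l3 l4 where
      "z = E w (k1*x1+k2*x2+k3*x3+k4*x4) (k1*y1+k2*y2+k3*y3+k4*y4)"
      "z' = E w (l1*x1+l2*x2+l3*x3+l4*x4) (l1*y1+l2*y2+l3*y3+l4*y4)" unfolding memS by blast
    then have "z + z' = E w ((k1+l1)*x1+(k2+l2)*x2+(k3+l3)*x3+(k4+l4)*x4) ((k1+l1)*y1+(k2+l2)*y2+(k3+l3)*y3+(k4+l4)*y4)"
      by (simp add: E_add algebra_simps)
    then show ?thesis unfolding memS by blast
  qed
  have Sint: "of_int k * z \<in> S" if "z \<in> S" for k z
  proof -
    from that obtain k1 k2 k3 k4 where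
      "z = E w (k1*x1+k2*x2+k3*x3+k4*x4) (k1*y1+k2*y2+k3*y3+k4*y4)" unfolding memS by blast
    then have "of_int k * z = E w ((k*k1)*x1+(k*k2)*x2+(k*k3)*x3+(k*k4)*x4) ((k*k1)*y1+(k*k2)*y2+(k*k3)*y3+(k*k4)*y4)"
      by (simp add: E_int algebra_simps)
    then show ?thesis unfolding memS by blast
  qed
  have memI: "x \<in> I \<longleftrightarrow> (\<exists>m n. x = of_int m * u1 + of_int n * u2)" for x
  proof -
    have "E w (m*(c*\<alpha>) + n*(c*\<beta>)) (n*c) = of_int m * u1 + of_int n * u2" for m n
      unfolding u1_def u2_def a_def b_def E_def by (simp add: algebra_simps)
    then show ?thesis unfolding I by auto
  qed
  have memJ: "y \<in> J \<longleftrightarrow> (\<exists>m n. y = of_int m * v1 + of_int n * v2)" for y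
  proof -
    have "E w (m*(d*\<gamma>) + n*(d*\<delta>)) (n*d) = of_int m * v1 + of_int n * v2" for m n
      unfolding v1_def v2_def a'_def b'_def E_def by (simp add: algebra_simps)
    then show ?thesis unfolding J by auto
  qed
  have Sform: "of_int k1 * (u1*v1) + of_int k2 * (u1*v2) + of_int k3 * (u2*v1) + of_int k4 * (u2*v2)
      = E w (k1*x1+k2*x2+k3*x3+k4*x4) (k1*y1+k2*y2+k3*y3+k4*y4)" for k1 k2 k3 k4
    unfolding P1 P2 P3 P4 E_int E_add by (simp add: algebra_simps)
  have prodS: "x * y \<in> S" if xI: "x \<in> I" and yJ: "y \<in> J" for x y
  proof -
    obtain m n where x: "x = of_int m * u1 + of_int n * u2" using xI memI by blast
    obtain m' n' where y: "y = of_int m' * v1 + of_int n' * v2" using yJ memJ by blast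
    have "x * y = of_int (m*m') * (u1*v1) + of_int (m*n') * (u1*v2) + of_int (n*m') * (u2*v1) + of_int (n*n') * (u2*v2)"
      unfolding x y by (simp add: algebra_simps)
    then show ?thesis unfolding Sform memS by blast
  qed
  have sub1: "ideal_mult I J \<subseteq> S"
  proof
    fix z assume "z \<in> ideal_mult I J"
    then obtain n :: nat and x y where z: "z = (\<Sum>k<n. x k * y k)" and xy: "\<forall>k<n. x k \<in> I \<and> y k \<in> J"
      unfolding ideal_mult_def by blast
    have "\<forall>k<n. x k \<in> I \<and> y k \<in> J \<Longrightarrow> (\<Sum>k<n. x k * y k) \<in> S" for n
    proof (induction n)
      case 0 then show ?case using S0 by simp
    next
      case (Suc n)
      then show ?case using Sadd prodS by simp
    qed
    then show "z \<in> S" using z xy by blast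
  qed
  have u1I: "of_int k * u1 \<in> I" for k unfolding memI by (rule exI[of _ k], rule exI[of _ 0]) simp
  have u2I: "of_int k * u2 \<in> I" for k unfolding memI by (rule exI[of _ 0], rule exI[of _ k]) simp
  have v1J: "v1 \<in> J" unfolding memJ by (rule exI[of _ 1], rule exI[of _ 0]) simp
  have v2J: "v2 \<in> J" unfolding memJ by (rule exI[of _ 0], rule exI[of _ 1]) simp
  have sub2: "S \<subseteq> ideal_mult I J"
  proof
    fix z assume "z \<in> S"
    then obtain k1 k2 k3 k4 where z: "z = E w (k1*x1+k2*x2+k3*x3+k4*x4) (k1*y1+k2*y2+k3*y3+k4*y4)"
      unfolding memS by blast
    define xs where "xs = (\<lambda>k::nat. if k = 0 then of_int k1 * u1 else if k = 1 then of_int k2 * u1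
       else if k = 2 then of_int k3 * u2 else of_int k4 * u2)"
    define ys where "ys = (\<lambda>k::nat. if k = 0 then v1 else if k = 1 then v2 else if k = 2 then v1 else v2)"
    have "(\<Sum>k<4. xs k * ys k) = of_int k1 * (u1*v1) + of_int k2 * (u1*v2) + of_int k3 * (u2*v1) + of_int k4 * (u2*v2)"
      unfolding xs_def ys_def by (simp add: numeral_eq_Suc lessThan_Suc algebra_simps)
    then have "z = (\<Sum>k<4. xs k * ys k)" unfolding z Sform by simp
    moreover have "\<forall>k<4. xs k \<in> I \<and> ys k \<in> J" unfolding xs_def ys_def using u1I u2I v1J v2J by auto
    ultimately show "z \<in> ideal_mult I J" unfolding ideal_mult_def by blast
  qed
  have IJ: "ideal_mult I J = S" using sub1 sub2 by blast
  have SR: "S \<subseteq> R" unfolding S_def R_eq by blast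
  have Smul: "r * z \<in> S" if "r \<in> R" "z \<in> S" for r z
  proof -
    from that obtain k1 k2 k3 k4 where "z = E w (k1*x1+k2*x2+k3*x3+k4*x4) (k1*y1+k2*y2+k3*y3+k4*y4)"
      unfolding memS by blast
    then have z: "z = of_int k1 * (u1*v1) + of_int k2 * (u1*v2) + of_int k3 * (u2*v1) + of_int k4 * (u2*v2)"
      using Sform by simp
    have ru1: "r * u1 \<in> I" and ru2: "r * u2 \<in> I"
      using idI that(1) u1I[of 1] u2I[of 1] unfolding ring_ideal_def by auto
    have "r * z = of_int k1 * ((r*u1)*v1) + of_int k2 * ((r*u1)*v2) + of_int k3 * ((r*u2)*v1) + of_int k4 * ((r*u2)*v2)"
      unfolding z by (simp add: algebra_simps)
    moreover have "of_int k1 * ((r*u1)*v1) + of_int k2 * ((r*u1)*v2) + of_int k3 * ((r*u2)*v1) + of_int k4 * ((r*u2)*v2) \<in> S"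
      using Sadd Sint prodS ru1 ru2 v1J v2J by simp
    ultimately show ?thesis by simp
  qed
  have idS: "ring_ideal R S" unfolding ring_ideal_def using SR S0 Sadd Smul by blast
  have "u1 * v1 \<noteq> 0" unfolding P1 E_eq0 x1_def a_def a'_def using pos by simp
  moreover have "u1 * v1 \<in> S" using prodS u1I[of 1] v1J by simp
  ultimately have nzS: "S \<noteq> {0}" by auto
  obtain A' B' C where hS: "A' > 0" "C > 0" "S = {E w (m*(C*A') + n*(C*B')) (n*C) | m n. True}"
    using hnf[OF idS nzS] by blast
  have normS: "ideal_norm R S = nat ((C*A')*C)"
    by (rule index) (use hS in \<open>auto simp: mult_pos_pos\<close>)
  have "E w (C*A') 0 \<in> S" unfolding hS(3) by (rule CollectI, rule exI[of _ 1], rule exI[of _ 0]) simp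
  then obtain k1 k2 k3 k4 where k: "C*A' = k1*x1+k2*x2+k3*x3+k4*x4" "0 = k1*y1+k2*y2+k3*y3+k4*y4"
    unfolding memS E_inj by blast
  have "E w (C*B') C \<in> S" unfolding hS(3) by (rule CollectI, rule exI[of _ 0], rule exI[of _ 1]) simp
  then obtain l1 l2 l3 l4 where l: "C*B' = l1*x1+l2*x2+l3*x3+l4*x4" "C = l1*y1+l2*y2+l3*y3+l4*y4"
    unfolding memS E_inj by blast
  define D where "D = a*c*a'*d"
  have M12: "x1*y2-y1*x2 = D*\<alpha>" unfolding x1_def y1_def x2_def y2_def D_def a_def a'_def by (simp add: algebra_simps)
  have M13: "x1*y3-y1*x3 = D*\<gamma>" unfolding x1_def y1_def x3_def y3_def D_def a_def a'_def by (simp add: algebra_simps)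
  have M14: "x1*y4-y1*x4 = D*(\<beta>+\<delta>-p)" unfolding x1_def y1_def x4_def y4_def D_def a_def a'_def b_def b'_def by (simp add: algebra_simps)
  have M23: "x2*y3-y2*x3 = D*(\<delta>-\<beta>)" unfolding x2_def y2_def x3_def y3_def D_def a_def a'_def b_def b'_def by (simp add: algebra_simps)
  have M24: "x2*y4-y2*x4 = D*t"
  proof -
    have "x2*y4-y2*x4 = a*c*d*d*(\<delta>^2 - p*\<delta> + q)" unfolding x2_def y2_def x4_def y4_def a_def a'_def b_def b'_def
      by (simp add: algebra_simps power2_eq_square)
    then show ?thesis unfolding t D_def a'_def by (simp add: algebra_simps)
  qed
  have M34: "x3*y4-y3*x4 = D*s"
  proof -
    have "x3*y4-y3*x4 = a'*d*c*c*(\<beta>^2 - p*\<beta> + q)" unfolding x3_def y3_def x4_def y4_def a_def a'_def b_def b'_def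
      by (simp add: algebra_simps power2_eq_square)
    then show ?thesis unfolding s D_def a_def by (simp add: algebra_simps)
  qed
  have "(C*A')*C = (k1*x1+k2*x2+k3*x3+k4*x4)*(l1*y1+l2*y2+l3*y3+l4*y4)
       - (k1*y1+k2*y2+k3*y3+k4*y4)*(l1*x1+l2*x2+l3*x3+l4*x4)" using k l by simp
  also have "\<dots> = D * ((k1*l2-k2*l1)*\<alpha> + (k1*l3-k3*l1)*\<gamma> + (k1*l4-k4*l1)*(\<beta>+\<delta>-p)
     + (k2*l3-k3*l2)*(\<delta>-\<beta>) + (k2*l4-k4*l2)*t + (k3*l4-k4*l3)*s)"
    unfolding minor_identity M12 M13 M14 M23 M24 M34 by (simp add: algebra_simps)
  finally have "D dvd (C*A')*C" by simp
  moreover have "(C*A')*C > 0" using hS by simp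
  ultimately have "D \<le> (C*A')*C" by (rule zdvd_imp_le)
  then have "nat D \<le> nat ((C*A')*C)" by simp
  moreover have "nat D = nat ((c*\<alpha>)*c) * nat ((d*\<gamma>)*d)"
    unfolding D_def a_def a'_def using pos by (simp add: nat_mult_distrib[symmetric] algebra_simps)
  ultimately show ?thesis unfolding IJ normS by simp
qed

end



lemma rat_int_bound:
  fixes y :: rat and D :: int
  assumes D: "D > 0" and y0: "0 \<le> y" and y1: "y < 1"
    and h: "\<And>n. \<exists>X::int. of_int D * y^n = of_int X"
  shows "y = 0"
proof (rule ccontr)
  assume "y \<noteq> 0"
  with y0 have ypos: "y > 0" by simp
  have "real_of_rat y < 1" using y1 by (simp add: of_rat_less_1_iff)
  moreover have "(0::real) < 1 / real_of_int D" using D by simp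
  ultimately obtain n where "real_of_rat y ^ n < 1 / real_of_int D"
    using real_arch_pow_inv by blast
  then have "real_of_rat (of_int D * y ^ n) < 1" using D
    by (simp add: of_rat_mult of_rat_power field_simps)
  then have lt: "of_int D * y ^ n < 1" by (simp add: of_rat_less_1_iff)
  have gt: "of_int D * y ^ n > 0" using D ypos by simp
  obtain X where X: "of_int D * y^n = (of_int X :: rat)" using h by blast
  from lt gt X have "0 < X" "X < 1" by simp_all
  then show False by simp
qed

lemma rat_common_denom:
  fixes r :: rat
  shows "\<exists>d X. d > (0::int) \<and> r = of_int X / of_int d"
proof -
  obtain X d where "quotient_of r = (X, d)" by (cases "quotient_of r") auto
  then show ?thesis using quotient_of_div quotient_of_denom_pos by blast
qed

lemma structure_thm:
  assumes qf: "quadratic_field K" and ord: "is_order K R"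
  shows "\<exists>w p q. qord R w p q"
proof -
  obtain w0 where w0: "w0 \<in> K" "w0 \<notin> \<rat>" and K: "K = {of_rat a + of_rat b * w0 | a b. True}"
    using qf unfolding quadratic_field_def by blast
  have RK: "R \<subseteq> K" and R0: "0 \<in> R" and R1: "1 \<in> R"
    and Radd: "\<And>x y. x \<in> R \<Longrightarrow> y \<in> R \<Longrightarrow> x + y \<in> R"
    and Rmul: "\<And>x y. x \<in> R \<Longrightarrow> y \<in> R \<Longrightarrow> x * y \<in> R"
    and Rneg: "\<And>x. x \<in> R \<Longrightarrow> - x \<in> R"
    and frac: "\<forall>x\<in>K. \<exists>a\<in>R. \<exists>b\<in>R. b \<noteq> 0 \<and> x = a / b"
    using ord unfolding is_order_def by auto
  obtain S where S: "finite S" "S \<subseteq> R" "R = {(\<Sum>s\<in>S. of_int (c s) * s) | c. True}"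
    using ord unfolding is_order_def by blast
  define F where "F = (\<lambda>a b. of_rat a + of_rat b * w0)"
  have F_inj: "F a b = F a' b' \<Longrightarrow> a = a' \<and> b = b'" for a b a' b'
  proof -
    assume h: "F a b = F a' b'"
    have "b = b'"
    proof (rule ccontr)
      assume "b \<noteq> b'"
      then have ne: "(of_rat b' - of_rat b :: complex) \<noteq> 0" by simp
      from h have "of_rat a - of_rat a' = (of_rat b' - of_rat b) * w0"
        unfolding F_def by (simp add: algebra_simps)
      then have "w0 = (of_rat a - of_rat a') / (of_rat b' - of_rat b)" using ne by (simp add: field_simps)
      then have "w0 \<in> \<rat>" by simp
      with w0 show False by simp
    qed
    with h show ?thesis unfolding F_def by simp
  qed
  have F_rat: "of_rat r = F r 0" for r unfolding F_def by simp
  have Rint: "of_int k \<in> R" for k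
  proof (induction k rule: int_induct[where k=0])
    case base then show ?case using R0 by simp
  next
    case (step1 i) then show ?case using Radd[OF _ R1] by simp
  next
    case (step2 i) then show ?case using Radd[OF _ Rneg[OF R1]] by simp
  qed
  define L where "L = (\<lambda>D::int. {F (of_int X / of_int D) (of_int Y / of_int D) | X Y. True})"
  have Ladd: "x + y \<in> L D" if "x \<in> L D" "y \<in> L D" for x y D
  proof -
    from that obtain X Y X' Y' where "x = F (of_int X / of_int D) (of_int Y / of_int D)"
      "y = F (of_int X' / of_int D) (of_int Y' / of_int D)" unfolding L_def by blast
    then have "x + y = F (of_int (X+X') / of_int D) (of_int (Y+Y') / of_int D)"
      unfolding F_def by (simp add: of_rat_add add_divide_distrib algebra_simps)
    then show ?thesis unfolding L_def by blast
  qed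
  have Lint: "of_int k * x \<in> L D" if "x \<in> L D" for x k D
  proof -
    from that obtain X Y where "x = F (of_int X / of_int D) (of_int Y / of_int D)" unfolding L_def by blast
    then have "of_int k * x = F (of_int (k*X) / of_int D) (of_int (k*Y) / of_int D)"
      unfolding F_def by (simp add: of_rat_mult of_rat_divide algebra_simps)
    then show ?thesis unfolding L_def by blast
  qed
  have L0: "0 \<in> L D" for D
  proof -
    have "0 = F (of_int 0 / of_int D) (of_int 0 / of_int D)" unfolding F_def by simp
    then show ?thesis unfolding L_def by blast
  qed
  have "finite T \<Longrightarrow> T \<subseteq> K \<Longrightarrow> \<exists>D>0. T \<subseteq> L D" for T
  proof (induction T rule: finite_induct)
    case empty then show ?case by (intro exI[of _ 1]) simp
  next
    case (insert s T)
    then obtain D where D: "D > 0" "T \<subseteq> L D" by auto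
    from insert.prems obtain a b where s: "s = F a b" unfolding K F_def by auto
    obtain da Xa where a: "da > 0" "a = of_int Xa / of_int da" using rat_common_denom by blast
    obtain db Xb where b: "db > 0" "b = of_int Xb / of_int db" using rat_common_denom by blast
    define D' where "D' = D * da * db"
    have D'pos: "D' > 0" unfolding D'_def using D a b by simp
    have sub: "L D \<subseteq> L D'"
    proof
      fix x assume "x \<in> L D"
      then obtain X Y where x: "x = F (of_int X / of_int D) (of_int Y / of_int D)" unfolding L_def by blast
      have e: "of_int X / of_int D = (of_int (X*da*db) / of_int D' :: rat)"
        "of_int Y / of_int D = (of_int (Y*da*db) / of_int D' :: rat)"
        unfolding D'_def using D a b by (simp_all add: field_simps)
      have "x = F (of_int (X*da*db) / of_int D') (of_int (Y*da*db) / of_int D')"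
        unfolding x by (simp only: e)
      then show "x \<in> L D'" unfolding L_def by blast
    qed
    have e: "a = of_int (Xa*D*db) / of_int D'" "b = of_int (Xb*D*da) / of_int D'"
      unfolding D'_def using D a b by (simp_all add: field_simps)
    have "s = F (of_int (Xa*D*db) / of_int D') (of_int (Xb*D*da) / of_int D')"
      unfolding s by (simp only: e)
    then have "s \<in> L D'" unfolding L_def by blast
    then show ?case using D'pos sub D(2) by blast
  qed
  then obtain D where D: "D > 0" "S \<subseteq> L D" using S(1,2) RK by blast
  have "finite T \<Longrightarrow> T \<subseteq> L D \<Longrightarrow> (\<Sum>s\<in>T. of_int (c s) * s) \<in> L D" for T c
  proof (induction T rule: finite_induct)
    case empty then show ?case using L0 by simp
  next
    case (insert s T) then show ?case using Ladd Lint by simp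
  qed
  then have RL: "R \<subseteq> L D" using S D by auto
  have ratint: "\<exists>k. of_rat y = (of_int k :: complex)" if yR: "of_rat y \<in> R" for y
  proof -
    have dint: "\<exists>X::int. of_int D * r^n = of_int X" if rR: "of_rat r \<in> R" for r n
    proof -
      have "of_rat r ^ n \<in> R"
        by (induction n) (use R1 Rmul rR in auto)
      then have "of_rat (r^n) \<in> L D" using RL by (auto simp: of_rat_power)
      then obtain X Y where "F (r^n) 0 = F (of_int X / of_int D) (of_int Y / of_int D)"
        unfolding L_def F_rat by blast
      then have "r^n = of_int X / of_int D" using F_inj by blast
      then have "of_int D * r^n = of_int X" using D by simp
      then show ?thesis by blast
    qed
    define z where "z = y - of_int \<lfloor>y\<rfloor>"
    have "(of_rat z :: complex) = of_rat y + - of_int \<lfloor>y\<rfloor>" unfolding z_def by (simp add: of_rat_diff)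
    then have zR: "of_rat z \<in> R" using Radd[OF yR Rneg[OF Rint]] by simp
    have "z = 0"
      by (rule rat_int_bound[OF D(1)]) (use dint[OF zR] in \<open>auto simp: z_def floor_less_iff less_floor_iff\<close>,
         use dint[OF zR] in \<open>simp add: z_def\<close>, linarith)
    then have "of_rat y = (of_int \<lfloor>y\<rfloor> :: complex)" unfolding z_def
      by (metis eq_iff_diff_eq_0 of_rat_of_int_eq)
    then show ?thesis by blast
  qed
  define Gy where "Gy = {Y. \<exists>X. F (of_int X / of_int D) (of_int Y / of_int D) \<in> R}"
  have "\<exists>g\<ge>0. Gy = {k*g | k. True}"
  proof (rule int_subgroup)
    have "F (of_int 0 / of_int D) (of_int 0 / of_int D) \<in> R" using R0 unfolding F_def by simp
    then show "0 \<in> Gy" unfolding Gy_def by blast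
    show "x + y \<in> Gy" if "x \<in> Gy" "y \<in> Gy" for x y
    proof -
      from that obtain u v where "F (of_int u / of_int D) (of_int x / of_int D) \<in> R"
        "F (of_int v / of_int D) (of_int y / of_int D) \<in> R" unfolding Gy_def by auto
      then have "F (of_int u / of_int D) (of_int x / of_int D) + F (of_int v / of_int D) (of_int y / of_int D) \<in> R"
        using Radd by blast
      moreover have "F (of_int u / of_int D) (of_int x / of_int D) + F (of_int v / of_int D) (of_int y / of_int D)
          = F (of_int (u+v) / of_int D) (of_int (x+y) / of_int D)"
        unfolding F_def by (simp add: of_rat_add add_divide_distrib algebra_simps)
      ultimately have "F (of_int (u+v) / of_int D) (of_int (x+y) / of_int D) \<in> R" by metis
      then show ?thesis unfolding Gy_def mem_Collect_eq by (rule exI)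
    qed
    show "- x \<in> Gy" if "x \<in> Gy" for x
    proof -
      from that obtain u where "F (of_int u / of_int D) (of_int x / of_int D) \<in> R" unfolding Gy_def by auto
      then have "- F (of_int u / of_int D) (of_int x / of_int D) \<in> R" using Rneg by blast
      moreover have "- F (of_int u / of_int D) (of_int x / of_int D) = F (of_int (-u) / of_int D) (of_int (-x) / of_int D)"
        unfolding F_def by (simp add: of_rat_minus algebra_simps)
      ultimately have "F (of_int (-u) / of_int D) (of_int (-x) / of_int D) \<in> R" by metis
      then show ?thesis unfolding Gy_def mem_Collect_eq by (rule exI)
    qed
  qed
  then obtain g where g: "g \<ge> 0" "Gy = {k*g | k. True}" by blast
  have RGy: "\<exists>X Y. z = F (of_int X / of_int D) (of_int Y / of_int D) \<and> Y \<in> Gy" if "z \<in> R" for z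
    using that RL unfolding L_def Gy_def by blast
  have "g \<noteq> 0"
  proof
    assume g0: "g = 0"
    have Rrat: "z \<in> \<rat>" if zR: "z \<in> R" for z
    proof -
      obtain X Y where "z = F (of_int X / of_int D) (of_int Y / of_int D)" "Y \<in> Gy" using RGy[OF zR] by blast
      then have "z = of_rat (of_int X / of_int D)" using g g0 unfolding F_def by auto
      then show ?thesis by simp
    qed
    obtain a b where "a \<in> R" "b \<in> R" "w0 = a / b" using frac w0(1) by blast
    then have "w0 \<in> \<rat>" using Rrat by simp
    with w0(2) show False by simp
  qed
  with g have gpos: "g > 0" by simp
  have "g \<in> Gy" using g by (auto intro: exI[of _ 1])
  then obtain X0 where X0: "F (of_int X0 / of_int D) (of_int g / of_int D) \<in> R" unfolding Gy_def by blast
  define w where "w = F (of_int X0 / of_int D) (of_int g / of_int D)"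
  have wR: "w \<in> R" using X0 unfolding w_def .
  have Req: "R = {E w x y | x y. True}"
  proof
    show "{E w x y | x y. True} \<subseteq> R"
    proof
      fix z assume "z \<in> {E w x y | x y. True}"
      then obtain x y where "z = E w x y" by blast
      moreover have "of_int x + of_int y * w \<in> R" using Radd[OF Rint Rmul[OF Rint wR]] .
      ultimately show "z \<in> R" unfolding E_def by simp
    qed
    show "R \<subseteq> {E w x y | x y. True}"
    proof
      fix z assume zR: "z \<in> R"
      obtain X Y where z: "z = F (of_int X / of_int D) (of_int Y / of_int D)" and "Y \<in> Gy" using RGy[OF zR] by blast
      then obtain n where n: "Y = n * g" using g by blast
      have "z + - (of_int n * w) \<in> R" using Radd[OF zR Rneg[OF Rmul[OF Rint wR]]] .
      moreover have "z + - (of_int n * w) = of_rat (of_int (X - n*X0) / of_int D)"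
        unfolding z w_def F_def n using D by (simp add: of_rat_diff of_rat_mult of_rat_divide field_simps)
      ultimately obtain m where "of_rat (of_int (X - n*X0) / of_int D) = (of_int m :: complex)"
        using ratint by metis
      then have "z = E w m n" using \<open>z + - (of_int n * w) = _\<close> unfolding E_def
        by (metis add_diff_cancel diff_conv_add_uminus)
      then show "z \<in> {E w x y | x y. True}" by blast
    qed
  qed
  have irr: "w \<notin> \<rat>"
  proof
    assume "w \<in> \<rat>"
    then obtain r where "w = of_rat r" by (auto elim: Rats_cases)
    then have "F r 0 = F (of_int X0 / of_int D) (of_int g / of_int D)" unfolding w_def F_rat by simp
    then have "of_int g / of_int D = (0::rat)" using F_inj by metis
    then show False using gpos D by simp
  qed
  have "w * w \<in> R" using Rmul[OF wR wR] .
  then obtain x y where xy: "w * w = E w x y" using Req by blast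
  have "w^2 + of_int (-y) * w + of_int (-x) = 0" using xy unfolding E_def by (simp add: power2_eq_square)
  then have "qord R w (-y) (-x)" using Req irr by unfold_locales
  then show ?thesis by blast
qed



theorem theorem3p3:
  fixes K R I J :: "complex set"
  assumes "quadratic_field K"
    and "is_order K R"
    and "ring_ideal R I" and "I \<noteq> {0}"
    and "ring_ideal R J" and "J \<noteq> {0}"
  shows "ideal_norm R (ideal_mult I J) \<ge> ideal_norm R I * ideal_norm R J"
proof -
  obtain w p q where Q: "qord R w p q" using structure_thm[OF assms(1,2)] by blast
  interpret qord R w p q by (rule Q)
  obtain \<alpha> \<beta> c where I: "\<alpha> > 0" "c > 0" "\<alpha> dvd (\<beta>^2 - p*\<beta> + q)"
    "I = {E w (m*(c*\<alpha>) + n*(c*\<beta>)) (n*c) | m n. True}"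
    using hnf[OF assms(3,4)] by blast
  obtain \<gamma> \<delta> d where J: "\<gamma> > 0" "d > 0" "\<gamma> dvd (\<delta>^2 - p*\<delta> + q)"
    "J = {E w (m*(d*\<gamma>) + n*(d*\<delta>)) (n*d) | m n. True}"
    using hnf[OF assms(5,6)] by blast
  obtain s where s: "\<beta>^2 - p*\<beta> + q = \<alpha> * s" using I(3) by blast
  obtain t where t: "\<delta>^2 - p*\<delta> + q = \<gamma> * t" using J(3) by blast
  have nI: "ideal_norm R I = nat ((c*\<alpha>)*c)" by (rule index) (use I in auto)
  have nJ: "ideal_norm R J = nat ((d*\<gamma>)*d)" by (rule index) (use J in auto)
  show ?thesis unfolding nI nJ
    by (rule main_ineq[OF assms(3) assms(5) I(4) J(4) I(1) J(1) I(2) J(2) s t])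
qed

end
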